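(* Let $D=(E,\mathcal{F})$ be a normal binary delta-matroid. Then the twist polynomial ${}^{\partial}w_{D}(z)$ has a non-zero constant term (i.e. $w(D*A)=0$ for some $A\subseteq E$) if and only if the intersection graph $G_D$ is a bipartite graph (in particular has no loops).
   Context: A delta-matroid is a set system $(E,\mathcal{F})$, $\mathcal{F}\ne\emptyset$ a family of subsets of finite $E$, satisfying: for all $X,Y\in\mathcal{F}$ and $u\in X\Delta Y$ there is $v\in X\Delta Y$ with $X\Delta\{u,v\}\in\mathcal{F}$. Twist: $D*A=(E,\{A\Delta X:X\in\mathcal{F}\})$. Width $w(D)$ = maximum minus minimum cardinality of feasible sets; twist polynomial ${}^{\partial}w_{D}(z)=\sum_{A\subseteq E}z^{w(D*A)}$. $D$ is normal if $\emptyset\in\mathcal{F}$. For a symmetric matrix $C$ over $GF(2)$ indexed by $E$, $D(C)=(E,\{A\subseteq E: C[A]\text{ nonsingular}\})$ ($C[A]$ principal submatrix, $C[\emptyset]$ nonsingular by convention). $D$ is binary if some twist of it is isomorphic to some $D(C)$. A normal binary $D$ equals $D(C)$ for a unique symmetric $C$; its intersection graph $G_D$ has vertex set $E$, distinct $u,v$ adjacent iff $C_{u,v}=1$, and a loop at $v$ iff $C_{v,v}=1$. *)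

theory Defs
  imports "HOL-Library.Z2" "HOL-Combinatorics.Permutations" "HOL-Computational_Algebra.Polynomial"
begin

definition symdiff :: "'a set \<Rightarrow> 'a set \<Rightarrow> 'a set" where
  "symdiff X Y = (X - Y) \<union> (Y - X)"

definition delta_matroid :: "'a set \<Rightarrow> 'a set set \<Rightarrow> bool" where
  "delta_matroid E F \<longleftrightarrow> finite E \<and> F \<noteq> {} \<and> (\<forall>X\<in>F. X \<subseteq> E) \<and>
     (\<forall>X\<in>F. \<forall>Y\<in>F. \<forall>u\<in>symdiff X Y.
        \<exists>v\<in>symdiff X Y. symdiff X {u,v} \<in> F)"

definition twist :: "'a set set \<Rightarrow> 'a set \<Rightarrow> 'a set set" where
  "twist F A = (\<lambda>X. symdiff A X) ` F"

definition width :: "'a set set \<Rightarrow> nat" where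
  "width F = Max (card ` F) - Min (card ` F)"

definition twist_poly :: "'a set \<Rightarrow> 'a set set \<Rightarrow> int poly" where
  "twist_poly E F = (\<Sum>A\<in>Pow E. monom 1 (width (twist F A)))"

definition normal :: "'a set set \<Rightarrow> bool" where
  "normal F \<longleftrightarrow> {} \<in> F"

definition det_sub :: "('a \<Rightarrow> 'a \<Rightarrow> bit) \<Rightarrow> 'a set \<Rightarrow> bit" where
  "det_sub C A = (\<Sum>p\<in>{p. p permutes A}. of_int (sign p) * (\<Prod>i\<in>A. C i (p i)))"

definition symmetric_mat :: "('a \<Rightarrow> 'a \<Rightarrow> bit) \<Rightarrow> bool" where
  "symmetric_mat C \<longleftrightarrow> (\<forall>u v. C u v = C v u)"

definition dm_of_mat :: "'a set \<Rightarrow> ('a \<Rightarrow> 'a \<Rightarrow> bit) \<Rightarrow> 'a set set" where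
  "dm_of_mat E C = {A. A \<subseteq> E \<and> det_sub C A \<noteq> 0}"

definition binary :: "'a set \<Rightarrow> 'a set set \<Rightarrow> bool" where
  "binary E F \<longleftrightarrow> (\<exists>A\<subseteq>E. \<exists>(f::'a \<Rightarrow> 'a) E' C. bij_betw f E E' \<and> symmetric_mat C \<and>
       (\<lambda>X. f ` X) ` twist F A = dm_of_mat E' C)"

definition inter_mat :: "'a set \<Rightarrow> 'a set set \<Rightarrow> ('a \<Rightarrow> 'a \<Rightarrow> bit)" where
  "inter_mat E F = (THE C. symmetric_mat C \<and> (\<forall>u v. C u v \<noteq> 0 \<longrightarrow> u \<in> E \<and> v \<in> E)
                         \<and> F = dm_of_mat E C)"

definition inter_graph_adj :: "'a set \<Rightarrow> 'a set set \<Rightarrow> 'a \<Rightarrow> 'a \<Rightarrow> bool" where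
  "inter_graph_adj E F u v \<longleftrightarrow> u \<in> E \<and> v \<in> E \<and> inter_mat E F u v = 1"

(* bipartite graph (on vertex set V, adjacency possibly with loops):
   V splits into two sides with every edge (incl. loops) joining different sides;
   in particular a bipartite graph has no loops *)
definition bipartite :: "'a set \<Rightarrow> ('a \<Rightarrow> 'a \<Rightarrow> bool) \<Rightarrow> bool" where
  "bipartite V adj \<longleftrightarrow> (\<exists>X\<subseteq>V. \<forall>u\<in>V. \<forall>v\<in>V. adj u v \<longrightarrow> (u \<in> X \<longleftrightarrow> v \<notin> X))"

end

theory Submission
  imports Defs "Jordan_Normal_Form.Determinant"
begin


lemma sign_bit[simp]: "(of_int (sign p) :: bit) = 1"
  unfolding sign_def by simp

lemma det_sub_alt: "det_sub C A = (\<Sum>p\<in>{p. p permutes A}. \<Prod>i\<in>A. C i (p i))"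
  unfolding det_sub_def by (simp only: sign_bit mult_1)

lemma det_sub_empty[simp]: "det_sub C {} = 1"
  by (simp add: det_sub_alt)

lemma det_sub_sing[simp]: "det_sub C {v} = C v v"
  by (simp add: det_sub_alt)

lemma permutes_pair:
  assumes "u \<noteq> v"
  shows "{p. p permutes {u,v}} = {id, Transposition.transpose u v}"
proof (rule equalityI; rule subsetI)
  fix p assume "p \<in> {p. p permutes {u,v}}"
  hence p: "p permutes {u,v}" by simp
  have pu: "p u \<in> {u,v}" "p v \<in> {u,v}" using permutes_in_image[OF p] by auto
  have inj: "p u \<noteq> p v" using permutes_inj[OF p] assms by (meson injD)
  have out: "\<And>x. x \<notin> {u,v} \<Longrightarrow> p x = x" using permutes_not_in[OF p] by auto
  show "p \<in> {id, Transposition.transpose u v}"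
  proof (cases "p u = u")
    case True
    hence "p v = v" using pu inj by auto
    hence "p = id" using True out by (intro ext) (metis id_apply insertE empty_iff)
    thus ?thesis by simp
  next
    case False
    hence "p u = v" "p v = u" using pu inj by auto
    hence "p = Transposition.transpose u v" using out
      by (auto simp: fun_eq_iff transpose_def)
    thus ?thesis by simp
  qed
next
  fix p assume "p \<in> {id, Transposition.transpose u v}"
  thus "p \<in> {p. p permutes {u,v}}"
    by (auto simp: permutes_swap_id)
qed

lemma det_sub_pair:
  assumes "u \<noteq> v"
  shows "det_sub C {u,v} = C u u * C v v + C u v * C v u"
proof -
  have "id \<noteq> Transposition.transpose u v" using assms
    by (metis id_apply transpose_apply_first)
  hence "det_sub C {u,v} = (\<Prod>i\<in>{u,v}. C i (id i)) + (\<Prod>i\<in>{u,v}. C i (Transposition.transpose u v i))"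
    unfolding det_sub_alt permutes_pair[OF assms] 
    apply (subst sum.insert) using \<open>id \<noteq> _\<close> apply blast+ by (simp only: sum.insert sum.empty finite.intros empty_iff add_0_right simp_thms)
  also have "\<dots> = C u u * C v v + C u v * C v u"
    using assms by (simp only: prod.insert finite.intros singleton_iff insert_iff empty_iff prod.empty mult_1_right id_apply transpose_apply_first transpose_apply_second simp_thms)
  finally show ?thesis .
qed

lemma det_sub_relabel:
  assumes f: "bij_betw f A B"
  shows "det_sub C B = det_sub (\<lambda>i j. C (f i) (f j)) A"
proof -
  let ?f = "(\<lambda>\<pi> x. if x \<in> B then f (\<pi> (inv_into A f x)) else x)"
  have "det_sub C B = (\<Sum>\<pi>\<in>{\<pi>. \<pi> permutes A}. \<Prod>i\<in>B. C i (?f \<pi> i))"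
    unfolding det_sub_alt
    by (rule sum.reindex_bij_betw[OF bij_betw_permutations[OF f], symmetric])
  also have "\<dots> = (\<Sum>\<pi>\<in>{\<pi>. \<pi> permutes A}. \<Prod>a\<in>A. C (f a) (f (\<pi> a)))"
  proof (rule sum.cong[OF refl])
    fix \<pi> assume "\<pi> \<in> {\<pi>. \<pi> permutes A}"
    have "(\<Prod>i\<in>B. C i (?f \<pi> i)) = (\<Prod>a\<in>A. C (f a) (?f \<pi> (f a)))"
      by (rule prod.reindex_bij_betw[OF f, symmetric])
    also have "\<dots> = (\<Prod>a\<in>A. C (f a) (f (\<pi> a)))"
      using f by (intro prod.cong refl) (auto simp: bij_betw_def bij_betw_inv_into_left)
    finally show "(\<Prod>i\<in>B. C i (?f \<pi> i)) = (\<Prod>a\<in>A. C (f a) (f (\<pi> a)))" .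
  qed
  finally show ?thesis unfolding det_sub_alt .
qed

lemma det_sub_cong:
  assumes "\<And>i j. i \<in> A \<Longrightarrow> j \<in> A \<Longrightarrow> C i j = C' i j"
  shows "det_sub C A = det_sub C' A"
  unfolding det_sub_alt
  by (intro sum.cong prod.cong refl assms) (auto simp: permutes_in_image)

lemma det_sub_extend:
  assumes S: "finite S" and Y: "Y \<subseteq> S"
  shows "det_sub (\<lambda>i j. if j \<in> Y then C i j else (if i = j then 1 else 0)) S = det_sub C Y"
proof -
  let ?D = "\<lambda>i j. if j \<in> Y then C i j else (if i = j then 1 else 0)"
  have sub: "{p. p permutes Y} \<subseteq> {p. p permutes S}" using permutes_subset Y by blast
  have zero: "(\<Prod>i\<in>S. ?D i (p i)) = 0" if p: "p \<in> {p. p permutes S} - {p. p permutes Y}" for p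
  proof -
    have pS: "p permutes S" and npY: "\<not> p permutes Y" using p by auto
    have "\<exists>i\<in>S. p i \<notin> Y \<and> p i \<noteq> i"
    proof (rule ccontr)
      assume "\<not> ?thesis"
      hence H: "\<And>i. i \<in> S \<Longrightarrow> p i \<notin> Y \<Longrightarrow> p i = i" by blast
      have "p x = x" if "x \<notin> Y" for x
      proof (cases "x \<in> S")
        case False thus ?thesis using permutes_not_in[OF pS] by auto
      next
        case True
        obtain i where i: "i \<in> S" "p i = x"
          using permutes_surj[OF pS] True permutes_image[OF pS] by (metis imageE)
        thus ?thesis using H[OF i(1)] that by auto
      qed
      hence "p permutes Y" using pS unfolding permutes_def by blast
      thus False using npY by simp
    qed
    then obtain i where i: "i \<in> S" "p i \<notin> Y" "p i \<noteq> i" by blast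
    hence "?D i (p i) = 0" by simp
    thus ?thesis using S i(1) by (rule_tac prod_zero) blast+
  qed
  have one: "(\<Prod>i\<in>S. ?D i (p i)) = (\<Prod>i\<in>Y. C i (p i))" if p: "p permutes Y" for p
  proof -
    have "(\<Prod>i\<in>S. ?D i (p i)) = (\<Prod>i\<in>Y. ?D i (p i))"
      using S Y permutes_not_in[OF p] by (intro prod.mono_neutral_right) auto
    also have "\<dots> = (\<Prod>i\<in>Y. C i (p i))"
      using permutes_in_image[OF p] by (intro prod.cong) auto
    finally show ?thesis .
  qed
  have fin: "finite {p. p permutes S}" using S finite_permutations by blast
  have "det_sub ?D S = (\<Sum>p\<in>{p. p permutes Y}. \<Prod>i\<in>S. ?D i (p i))"
    unfolding det_sub_alt by (rule sum.mono_neutral_right[OF fin sub]) (use zero in blast)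
  also have "\<dots> = det_sub C Y" unfolding det_sub_alt using one by simp
  finally show ?thesis .
qed

lemma det_jnf: "det (mat n n (\<lambda>(i,j). g i j)) = det_sub g {0..<n}"
  unfolding det_def det_sub_alt
  by (auto intro!: sum.cong prod.cong simp: permutes_in_image)


definition colmat :: "nat \<Rightarrow> (nat \<Rightarrow> nat \<Rightarrow> bit) \<Rightarrow> nat set \<Rightarrow> bit mat" where
  "colmat n c Y = mat n n (\<lambda>(i,j). if j \<in> Y then c i j else (if i = j then 1 else 0))"

lemma colmat_carrier[simp]: "colmat n c Y \<in> carrier_mat n n"
  unfolding colmat_def by simp

lemma colmat_dims[simp]: "dim_row (colmat n c Y) = n" "dim_col (colmat n c Y) = n"
  unfolding colmat_def by simp_all

lemma det_colmat: "Y \<subseteq> {0..<n} \<Longrightarrow> det (colmat n c Y) = det_sub c Y"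
  unfolding colmat_def det_jnf by (rule det_sub_extend) auto

lemma colmat_index: "i < n \<Longrightarrow> j < n \<Longrightarrow> colmat n c Y $$ (i,j) = (if j \<in> Y then c i j else (if i = j then 1 else 0))"
  unfolding colmat_def by simp

lemma NV_entry:
  fixes c :: "nat \<Rightarrow> nat \<Rightarrow> bit"
  assumes i: "i < n" and k: "k < n"
  shows "(colmat n c A * transpose_mat (colmat n c ({0..<n} - A))) $$ (i,k)
     = (if k \<in> A then c i k else 0) + (if i \<notin> A then c k i else 0)"
proof -
  let ?N = "colmat n c A" and ?V = "colmat n c ({0..<n} - A)"
  have "(?N * transpose_mat ?V) $$ (i,k) = row ?N i \<bullet> col (transpose_mat ?V) k"
    using i k by (intro index_mult_mat(1)) auto
  also have "\<dots> = (\<Sum>j\<in>{0..<n}. ?N $$ (i,j) * ?V $$ (k,j))"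
    unfolding scalar_prod_def using i k by (intro sum.cong) auto
  also have "\<dots> = (\<Sum>j\<in>{0..<n}. (if j = k then (if k \<in> A then c i k else 0) else 0)
        + (if j = i then (if i \<notin> A then c k i else 0) else 0))"
    using i k by (intro sum.cong refl) (auto simp: colmat_index)
  also have "\<dots> = (if k \<in> A then c i k else 0) + (if i \<notin> A then c k i else 0)"
    unfolding sum.distrib
    using i k sum.delta[of "{0..<n}" k "\<lambda>_. (if k \<in> A then c i k else 0)"]
       sum.delta[of "{0..<n}" i "\<lambda>_. (if i \<notin> A then c k i else 0)"]
    by (simp only: finite_atLeastLessThan atLeastLessThan_iff zero_le simp_thms if_True)
  finally show ?thesis .
qed

lemma pivot:
  fixes c :: "nat \<Rightarrow> nat \<Rightarrow> bit"
  assumes sym: "\<And>i j. c i j = c j i" and A: "A \<subseteq> {0..<n}" and dA: "det_sub c A \<noteq> 0"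
  shows "\<exists>c'. (\<forall>i j. c' i j = c' j i) \<and>
     (\<forall>Y \<subseteq> {0..<n}. det_sub c' Y \<noteq> 0 \<longleftrightarrow> det_sub c (symdiff Y A) \<noteq> 0)"
proof -
  define N where "N = colmat n c A"
  define V where "V = colmat n c ({0..<n} - A)"
  have N: "N \<in> carrier_mat n n" and V: "V \<in> carrier_mat n n" unfolding N_def V_def by auto
  have "det N \<noteq> 0" unfolding N_def using det_colmat[OF A] dA by simp
  from det_non_zero_imp_unit[OF N this, of "()"]
  obtain N' where N': "N' \<in> carrier_mat n n" and N'N: "N' * N = 1\<^sub>m n" and NN': "N * N' = 1\<^sub>m n"
    unfolding Units_def ring_mat_def by auto
  have dN': "det N' \<noteq> 0"
  proof
    assume "det N' = 0"
    hence "det (N' * N) = 0" using det_mult[OF N' N] by simp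
    thus False using N'N by simp
  qed
  define M where "M = N' * V"
  have M: "M \<in> carrier_mat n n" unfolding M_def using N' V by simp
  define c' where "c' = (\<lambda>i j. if i < n \<and> j < n then M $$ (i,j) else 0)"
  define P where "P = N * transpose_mat V"
  have P: "P \<in> carrier_mat n n" unfolding P_def using N V by simp
  have Psym: "transpose_mat P = P"
  proof (rule eq_matI)
    fix i k assume "i < dim_row P" "k < dim_col P"
    hence ik: "i < n" "k < n" using P by auto
    have e1: "P $$ (i,k) = (if k \<in> A then c i k else 0) + (if i \<notin> A then c k i else 0)"
      unfolding P_def N_def V_def by (rule NV_entry[OF ik])
    have e2: "P $$ (k,i) = (if i \<in> A then c k i else 0) + (if k \<notin> A then c i k else 0)"
      unfolding P_def N_def V_def by (rule NV_entry[OF ik(2,1)])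
    have "P $$ (k,i) = P $$ (i,k)"
      unfolding e1 e2 using sym[of i k] by (cases "i \<in> A"; cases "k \<in> A") auto
    thus "transpose_mat P $$ (i, k) = P $$ (i, k)" using ik P by simp
  qed (use P in auto)
  have "transpose_mat M = transpose_mat V * transpose_mat N'"
    unfolding M_def by (rule transpose_mult[OF N' V])
  also have "\<dots> = (N' * N) * transpose_mat V * transpose_mat N'"
    using N'N V by simp
  also have "\<dots> = N' * P * transpose_mat N'"
    unfolding P_def using N' N V by (simp add: assoc_mult_mat[of _ n n])
  also have "\<dots> = N' * transpose_mat P * transpose_mat N'" using Psym by simp
  also have "\<dots> = N' * (V * transpose_mat N) * transpose_mat N'"
    unfolding P_def using N V by (simp add: transpose_mult[of _ n n])
  also have "\<dots> = N' * V * transpose_mat N * transpose_mat N'"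
    using N' N V by (subst assoc_mult_mat[of N' n n V n "transpose_mat N" n]) auto
  also have "\<dots> = N' * V * (transpose_mat N * transpose_mat N')"
    using N' N V by (subst assoc_mult_mat[of "N' * V" n n "transpose_mat N" n "transpose_mat N'" n]) auto
  also have "transpose_mat N * transpose_mat N' = 1\<^sub>m n"
    using transpose_mult[OF N' N] N'N by simp
  finally have Mt: "transpose_mat M = M" unfolding M_def using N' V by simp
  have symc': "\<forall>i j. c' i j = c' j i"
  proof (intro allI)
    fix i j
    show "c' i j = c' j i"
    proof (cases "i < n \<and> j < n")
      case True
      hence "M $$ (i,j) = transpose_mat M $$ (i,j)" using Mt by simp
      also have "\<dots> = M $$ (j,i)" using True M by simp
      finally show ?thesis unfolding c'_def using True by simp
    qed (auto simp: c'_def)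
  qed
  have feas: "det_sub c' Y \<noteq> 0 \<longleftrightarrow> det_sub c (symdiff Y A) \<noteq> 0" if Y: "Y \<subseteq> {0..<n}" for Y
  proof -
    define W where "W = colmat n c (symdiff Y A)"
    have W: "W \<in> carrier_mat n n" unfolding W_def by simp
    have colW: "col W j = (if j \<in> Y then col V j else col N j)" if j: "j < n" for j
      using j by (intro eq_vecI) (auto simp: W_def V_def N_def colmat_index symdiff_def)
    have "N' * W = colmat n c' Y"
    proof (rule eq_matI)
      fix i j assume "i < dim_row (colmat n c' Y)" "j < dim_col (colmat n c' Y)"
      hence ij: "i < n" "j < n" by auto
      have "(N' * W) $$ (i,j) = row N' i \<bullet> col W j" using ij N' W by simp
      also have "\<dots> = (if j \<in> Y then (N' * V) $$ (i,j) else (N' * N) $$ (i,j))"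
        using ij N' V N colW[OF ij(2)] by simp
      also have "\<dots> = colmat n c' Y $$ (i,j)"
        using ij N'N by (simp add: colmat_index c'_def M_def)
      finally show "(N' * W) $$ (i,j) = colmat n c' Y $$ (i,j)" .
    qed (use N' W in auto)
    hence "det_sub c' Y = det N' * det W"
      using det_colmat[OF Y, of c'] det_mult[OF N' W] by simp
    moreover have "det W = det_sub c (symdiff Y A)"
      unfolding W_def using Y A by (intro det_colmat) (auto simp: symdiff_def)
    ultimately show ?thesis using dN' by simp
  qed
  show ?thesis using symc' feas by blast
qed





lemma pivot_set:
  fixes C :: "'a \<Rightarrow> 'a \<Rightarrow> bit"
  assumes fin: "finite E" and sym: "symmetric_mat C" and A: "A \<subseteq> E" and dA: "det_sub C A \<noteq> 0"
  shows "\<exists>C'. symmetric_mat C' \<and> (\<forall>u v. C' u v \<noteq> 0 \<longrightarrow> u \<in> E \<and> v \<in> E) \<and>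
     (\<forall>Y \<subseteq> E. det_sub C' Y \<noteq> 0 \<longleftrightarrow> det_sub C (symdiff Y A) \<noteq> 0)"
proof -
  obtain e where e: "bij_betw e {0..<card E} E" using ex_bij_betw_nat_finite[OF fin] by blast
  define n where "n = card E"
  have e: "bij_betw e {0..<n} E" using e n_def by simp
  define pre where "pre = (\<lambda>B. {i \<in> {0..<n}. e i \<in> B})"
  have preb: "bij_betw e (pre B) B" if "B \<subseteq> E" for B
  proof -
    have "bij_betw e (pre B) (e ` pre B)"
      by (rule bij_betw_subset[OF e]) (auto simp: pre_def)
    moreover have "e ` pre B = B" using that e unfolding pre_def bij_betw_def by force
    ultimately show ?thesis by simp
  qed
  define c where "c = (\<lambda>i j. C (e i) (e j))"
  have dsub: "det_sub C B = det_sub c (pre B)" if "B \<subseteq> E" for B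
    unfolding c_def by (rule det_sub_relabel[OF preb[OF that]])
  have symc: "\<And>i j. c i j = c j i" using sym unfolding c_def symmetric_mat_def by simp
  have preA: "pre A \<subseteq> {0..<n}" unfolding pre_def by auto
  obtain c' where symc': "\<forall>i j. c' i j = c' j i"
    and feas: "\<forall>Y \<subseteq> {0..<n}. det_sub c' Y \<noteq> 0 \<longleftrightarrow> det_sub c (symdiff Y (pre A)) \<noteq> 0"
    using pivot[of c "pre A" n, OF symc preA] dA dsub[OF A] by auto
  define ie where "ie = inv_into {0..<n} e"
  define C' where "C' = (\<lambda>u v. if u \<in> E \<and> v \<in> E then c' (ie u) (ie v) else 0)"
  have "symmetric_mat C'" unfolding symmetric_mat_def C'_def using symc' by auto
  moreover have "\<forall>u v. C' u v \<noteq> 0 \<longrightarrow> u \<in> E \<and> v \<in> E" unfolding C'_def by auto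
  moreover have "det_sub C' Y \<noteq> 0 \<longleftrightarrow> det_sub C (symdiff Y A) \<noteq> 0" if Y: "Y \<subseteq> E" for Y
  proof -
    have "det_sub C' Y = det_sub (\<lambda>i j. C' (e i) (e j)) (pre Y)"
      by (rule det_sub_relabel[OF preb[OF Y]])
    also have "\<dots> = det_sub c' (pre Y)"
    proof (rule det_sub_cong)
      fix i j assume "i \<in> pre Y" "j \<in> pre Y"
      hence "i < n" "j < n" "e i \<in> E" "e j \<in> E" using Y unfolding pre_def by auto
      moreover have "ie (e i) = i" "ie (e j) = j"
        unfolding ie_def using e \<open>i < n\<close> \<open>j < n\<close> by (auto simp: bij_betw_def inv_into_f_f)
      ultimately show "C' (e i) (e j) = c' i j" unfolding C'_def by simp
    qed
    finally have 1: "det_sub C' Y = det_sub c' (pre Y)" .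
    have 2: "symdiff (pre Y) (pre A) = pre (symdiff Y A)" unfolding pre_def symdiff_def by auto
    have 3: "symdiff Y A \<subseteq> E" using Y A unfolding symdiff_def by auto
    have 4: "pre Y \<subseteq> {0..<n}" unfolding pre_def by auto
    show ?thesis unfolding 1 using feas[rule_format, OF 4] 2 dsub[OF 3] by simp
  qed
  ultimately show ?thesis by blast
qed

lemma symdiff_symdiff: "symdiff A (symdiff A X) = X"
  unfolding symdiff_def by auto

lemma symdiff_commute: "symdiff A X = symdiff X A"
  unfolding symdiff_def by auto

lemma bit_cases: "(x::bit) = 0 \<or> x = 1"
  by (cases "x = 0") auto

lemma uniq_mat:
  assumes s1: "symmetric_mat C1" and s2: "symmetric_mat C2"
    and z1: "\<forall>u v. C1 u v \<noteq> 0 \<longrightarrow> u \<in> E \<and> v \<in> E"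
    and z2: "\<forall>u v. C2 u v \<noteq> 0 \<longrightarrow> u \<in> E \<and> v \<in> E"
    and eq: "dm_of_mat E C1 = dm_of_mat E C2"
  shows "C1 = C2"
proof (intro ext)
  fix u v
  have key: "det_sub C1 Y \<noteq> 0 \<longleftrightarrow> det_sub C2 Y \<noteq> 0" if "Y \<subseteq> E" for Y
    using eq that unfolding dm_of_mat_def by blast
  have diag: "C1 w w = C2 w w" if "w \<in> E" for w
    using key[of "{w}"] that bit_cases[of "C1 w w"] bit_cases[of "C2 w w"] by auto
  show "C1 u v = C2 u v"
  proof (cases "u \<in> E \<and> v \<in> E")
    case False thus ?thesis using z1 z2 by metis
  next
    case True
    show ?thesis
    proof (cases "u = v")
      case True thus ?thesis using diag \<open>u \<in> E \<and> v \<in> E\<close> by simp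
    next
      case False
      have "det_sub C1 {u,v} \<noteq> 0 \<longleftrightarrow> det_sub C2 {u,v} \<noteq> 0" using key True by auto
      hence "C1 u u * C1 v v + C1 u v * C1 v u \<noteq> 0 \<longleftrightarrow> C2 u u * C2 v v + C2 u v * C2 v u \<noteq> 0"
        unfolding det_sub_pair[OF False] .
      moreover have "C1 v u = C1 u v" "C2 v u = C2 u v" using s1 s2 unfolding symmetric_mat_def by auto
      moreover have "C1 u u = C2 u u" "C1 v v = C2 v v" using diag True by auto
      ultimately show ?thesis
        using bit_cases[of "C1 u u"] bit_cases[of "C2 v v"] bit_cases[of "C1 u v"] bit_cases[of "C2 u v"]
        by auto
    qed
  qed
qed

lemma normal_form:
  assumes dm: "delta_matroid E F" and nf: "normal F" and bin: "binary E F"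
  shows "\<exists>C. symmetric_mat C \<and> (\<forall>u v. C u v \<noteq> 0 \<longrightarrow> u \<in> E \<and> v \<in> E) \<and> F = dm_of_mat E C"
proof -
  have fin: "finite E" using dm unfolding delta_matroid_def by (rule conjunct1)
  have subA: "\<forall>X\<in>F. X \<subseteq> E" using dm unfolding delta_matroid_def by (elim conjE) assumption
  have sub: "\<And>X. X \<in> F \<Longrightarrow> X \<subseteq> E" using subA by (rule bspec)
  obtain A0 and f :: "'a \<Rightarrow> 'a" and E' C where A0: "A0 \<subseteq> E" and f: "bij_betw f E E'" and sC: "symmetric_mat C"
    and img: "(\<lambda>X. f ` X) ` twist F A0 = dm_of_mat E' C"
    using bin unfolding binary_def by (elim exE conjE) metis
  define C0 where "C0 = (\<lambda>u v. C (f u) (f v))"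
  have sC0: "symmetric_mat C0" using sC unfolding C0_def symmetric_mat_def by simp
  have injf: "inj_on f E" using f by (rule bij_betw_imp_inj_on)
  have rel: "det_sub C (f ` X) = det_sub C0 X" if "X \<subseteq> E" for X
    unfolding C0_def by (rule det_sub_relabel) (use injf that in \<open>auto simp: bij_betw_def intro: inj_on_subset\<close>)
  have twsub: "X \<subseteq> E" if "X \<in> twist F A0" for X
    using that A0 sub unfolding twist_def symdiff_def by auto
  have T: "twist F A0 = dm_of_mat E C0"
  proof (rule equalityI; rule subsetI)
    fix X assume X: "X \<in> twist F A0"
    hence "f ` X \<in> dm_of_mat E' C" using img by blast
    thus "X \<in> dm_of_mat E C0" using rel[OF twsub[OF X]] twsub[OF X] unfolding dm_of_mat_def by auto
  next
    fix X assume X: "X \<in> dm_of_mat E C0"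
    hence XE: "X \<subseteq> E" and d: "det_sub C0 X \<noteq> 0" unfolding dm_of_mat_def by auto
    have "f ` X \<subseteq> E'" using XE f unfolding bij_betw_def by auto
    hence "f ` X \<in> dm_of_mat E' C" using d rel[OF XE] unfolding dm_of_mat_def by auto
    then obtain Z where Z: "Z \<in> twist F A0" "f ` Z = f ` X" using img by (metis imageE)
    have "Z = X" using inj_on_image_eq_iff[OF injf twsub[OF Z(1)] XE] Z(2) by simp
    thus "X \<in> twist F A0" using Z by simp
  qed
  have "symdiff A0 {} = A0" by (simp add: symdiff_def)
  hence "A0 \<in> twist F A0" using nf unfolding normal_def twist_def by (metis image_eqI)
  hence dA0: "det_sub C0 A0 \<noteq> 0" using T unfolding dm_of_mat_def by auto
  obtain C' where sC': "symmetric_mat C'" and zC': "\<forall>u v. C' u v \<noteq> 0 \<longrightarrow> u \<in> E \<and> v \<in> E"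
    and fe: "\<forall>Y \<subseteq> E. det_sub C' Y \<noteq> 0 \<longleftrightarrow> det_sub C0 (symdiff Y A0) \<noteq> 0"
    using pivot_set[OF fin sC0 A0 dA0] by blast
  have "F = dm_of_mat E C'"
  proof (rule equalityI; rule subsetI)
    fix Y assume Y: "Y \<in> F"
    hence "symdiff A0 Y \<in> twist F A0" unfolding twist_def by blast
    hence "symdiff Y A0 \<in> dm_of_mat E C0" using T symdiff_commute[of A0 Y] by simp
    hence "det_sub C0 (symdiff Y A0) \<noteq> 0" unfolding dm_of_mat_def by simp
    thus "Y \<in> dm_of_mat E C'" using fe sub[OF Y] unfolding dm_of_mat_def by auto
  next
    fix Y assume Y: "Y \<in> dm_of_mat E C'"
    hence YE: "Y \<subseteq> E" and "det_sub C0 (symdiff Y A0) \<noteq> 0" using fe unfolding dm_of_mat_def by auto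
    moreover have "symdiff Y A0 \<subseteq> E" using YE A0 unfolding symdiff_def by auto
    ultimately have "symdiff Y A0 \<in> dm_of_mat E C0" unfolding dm_of_mat_def by simp
    hence "symdiff A0 Y \<in> twist F A0" using T symdiff_commute[of A0 Y] by simp
    then obtain Z where Z: "Z \<in> F" "symdiff A0 Z = symdiff A0 Y" unfolding twist_def by blast
    have "Z = Y" using arg_cong[OF Z(2), of "symdiff A0"] by (simp add: symdiff_symdiff)
    thus "Y \<in> F" using Z by simp
  qed
  thus ?thesis using sC' zC' by blast
qed

lemma inter_mat_char:
  assumes dm: "delta_matroid E F" and nf: "normal F" and bin: "binary E F"
  shows "symmetric_mat (inter_mat E F) \<and> (\<forall>u v. inter_mat E F u v \<noteq> 0 \<longrightarrow> u \<in> E \<and> v \<in> E)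
          \<and> F = dm_of_mat E (inter_mat E F)"
proof -
  obtain C where C: "symmetric_mat C \<and> (\<forall>u v. C u v \<noteq> 0 \<longrightarrow> u \<in> E \<and> v \<in> E) \<and> F = dm_of_mat E C"
    using normal_form[OF assms] by blast
  have h: "inter_mat E F = C" unfolding inter_mat_def
  proof (rule the_equality)
    show "symmetric_mat C \<and> (\<forall>u v. C u v \<noteq> 0 \<longrightarrow> u \<in> E \<and> v \<in> E) \<and> F = dm_of_mat E C" by (rule C)
  next
    fix C' assume "symmetric_mat C' \<and> (\<forall>u v. C' u v \<noteq> 0 \<longrightarrow> u \<in> E \<and> v \<in> E) \<and> F = dm_of_mat E C'"
    hence a: "symmetric_mat C'" "\<forall>u v. C' u v \<noteq> 0 \<longrightarrow> u \<in> E \<and> v \<in> E" "F = dm_of_mat E C'" by blast+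
    have b: "symmetric_mat C" "\<forall>u v. C u v \<noteq> 0 \<longrightarrow> u \<in> E \<and> v \<in> E" "F = dm_of_mat E C" using C by blast+
    have "dm_of_mat E C' = dm_of_mat E C" using a(3) b(3) by (rule trans[OF sym])
    thus "C' = C" by (rule uniq_mat[OF a(1) b(1) a(2) b(2)])
  qed
  show ?thesis unfolding h by (rule C)
qed




lemma card_split: "finite Y \<Longrightarrow> card Y = card (Y \<inter> X) + card (Y - X)"
proof -
  assume f: "finite Y"
  have "Y = (Y \<inter> X) \<union> (Y - X)" by blast
  hence "card Y = card ((Y \<inter> X) \<union> (Y - X))" by simp
  also have "\<dots> = card (Y \<inter> X) + card (Y - X)" using f by (intro card_Un_disjoint) auto
  finally show ?thesis .
qed

lemma card_symdiff:
  assumes "finite A" "finite X"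
  shows "card (symdiff A X) + 2 * card (A \<inter> X) = card A + card X"
proof -
  have "card (symdiff A X) = card (A - X) + card (X - A)"
    unfolding symdiff_def using assms by (intro card_Un_disjoint) auto
  moreover have "card A = card (A \<inter> X) + card (A - X)" using card_split assms by blast
  moreover have "card X = card (X \<inter> A) + card (X - A)" using card_split assms by blast
  moreover have "X \<inter> A = A \<inter> X" by blast
  ultimately show ?thesis by simp
qed

lemma det_bip:
  assumes fin: "finite Y" and H: "\<And>u v. u \<in> Y \<Longrightarrow> v \<in> Y \<Longrightarrow> C u v \<noteq> 0 \<Longrightarrow> (u \<in> X \<longleftrightarrow> v \<notin> X)"
    and d: "det_sub C Y \<noteq> 0"
  shows "card (Y \<inter> X) = card (Y - X)"
proof -
  obtain p where p: "p permutes Y" and pr: "(\<Prod>i\<in>Y. C i (p i)) \<noteq> 0"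
  proof -
    from d have "(\<Sum>p\<in>{p. p permutes Y}. \<Prod>i\<in>Y. C i (p i)) \<noteq> 0" unfolding det_sub_alt .
    then obtain p where "p \<in> {p. p permutes Y}" "(\<Prod>i\<in>Y. C i (p i)) \<noteq> 0"
      by (meson sum.neutral)
    thus ?thesis using that by blast
  qed
  have nz: "C i (p i) \<noteq> 0" if "i \<in> Y" for i
  proof
    assume "C i (p i) = 0"
    hence "(\<Prod>i\<in>Y. C i (p i)) = 0" using fin that by (rule_tac prod_zero) blast+
    thus False using pr by simp
  qed
  have inj: "inj_on p S" for S using permutes_inj[OF p] by (rule inj_on_subset) simp
  have pY: "p i \<in> Y" if "i \<in> Y" for i using permutes_in_image[OF p] that by simp
  have "card (Y \<inter> X) \<le> card (Y - X)"
  proof (rule card_inj_on_le[OF inj])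
    show "p ` (Y \<inter> X) \<subseteq> Y - X" using H nz pY by auto
  qed (use fin in auto)
  moreover have "card (Y - X) \<le> card (Y \<inter> X)"
  proof (rule card_inj_on_le[OF inj])
    show "p ` (Y - X) \<subseteq> Y \<inter> X" using H nz pY by auto
  qed (use fin in auto)
  ultimately show ?thesis by simp
qed

lemma width_zero_iff:
  assumes fin: "finite W" and ne: "W \<noteq> {}"
  shows "width W = 0 \<longleftrightarrow> (\<forall>X\<in>W. \<forall>Y\<in>W. card X = card Y)"
proof
  assume w: "width W = 0"
  have f: "finite (card ` W)" "card ` W \<noteq> {}" using fin ne by auto
  hence mm: "Max (card ` W) \<le> Min (card ` W)" using w unfolding width_def by simp
  have 1: "card X \<le> Max (card ` W)" if "X \<in> W" for X
    using f(1) imageI[OF that, of card] by (rule Max_ge)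
  have 2: "Min (card ` W) \<le> card X" if "X \<in> W" for X
    using f(1) imageI[OF that, of card] by (rule Min_le)
  have le: "card X \<le> card Y" if "X \<in> W" "Y \<in> W" for X Y
    using le_trans[OF 1[OF that(1)] le_trans[OF mm 2[OF that(2)]]] .
  show "\<forall>X\<in>W. \<forall>Y\<in>W. card X = card Y"
  proof (intro ballI)
    fix X Y assume "X \<in> W" "Y \<in> W"
    show "card X = card Y" using le[OF \<open>X \<in> W\<close> \<open>Y \<in> W\<close>] le[OF \<open>Y \<in> W\<close> \<open>X \<in> W\<close>] by (rule le_antisym)
  qed
next
  assume H: "\<forall>X\<in>W. \<forall>Y\<in>W. card X = card Y"
  have f: "finite (card ` W)" "card ` W \<noteq> {}" using fin ne by auto
  obtain X where X: "X \<in> W" "Max (card ` W) = card X" using Max_in[OF f] by auto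
  obtain Y where Y: "Y \<in> W" "Min (card ` W) = card Y" using Min_in[OF f] by auto
  have "card X = card Y" using H X(1) Y(1) by blast
  thus "width W = 0" unfolding width_def X(2) Y(2) by simp
qed

lemma coeff_twist_poly:
  assumes fin: "finite E"
  shows "coeff (twist_poly E F) 0 \<noteq> 0 \<longleftrightarrow> (\<exists>A\<subseteq>E. width (twist F A) = 0)"
proof -
  have "coeff (twist_poly E F) 0 = (\<Sum>A\<in>Pow E. (if width (twist F A) = 0 then 1 else 0))"
    unfolding twist_poly_def coeff_sum coeff_monom by (intro sum.cong) auto
  moreover have "(\<Sum>A\<in>Pow E. (if width (twist F A) = 0 then 1 else 0 :: int)) = 0
      \<longleftrightarrow> (\<forall>A\<in>Pow E. (if width (twist F A) = 0 then 1 else 0 :: int) = 0)"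
    using fin by (intro sum_nonneg_eq_0_iff) auto
  ultimately show ?thesis by auto
qed




theorem mainTheorem8:
  fixes E :: "'a set" and F :: "'a set set"
  assumes "delta_matroid E F" and "normal F" and "binary E F"
  shows "coeff (twist_poly E F) 0 \<noteq> 0 \<longleftrightarrow> bipartite E (inter_graph_adj E F)"
proof -
  note dm = assms(1)
  define C where "C = inter_mat E F"
  have ch: "symmetric_mat C \<and> (\<forall>u v. C u v \<noteq> 0 \<longrightarrow> u \<in> E \<and> v \<in> E) \<and> F = dm_of_mat E C"
    unfolding C_def by (rule inter_mat_char[OF assms])
  have symC: "\<And>u v. C v u = C u v" using ch unfolding symmetric_mat_def by (elim conjE) metis
  have FD: "F = dm_of_mat E C" using ch by (elim conjE)
  have fin: "finite E" using dm unfolding delta_matroid_def by (rule conjunct1)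
  have Fne: "F \<noteq> {}" using dm unfolding delta_matroid_def by (elim conjE) assumption
  have subA: "\<forall>X\<in>F. X \<subseteq> E" using dm unfolding delta_matroid_def by (elim conjE) assumption
  have sub: "\<And>X. X \<in> F \<Longrightarrow> X \<subseteq> E" using subA by (rule bspec)
  have empF: "{} \<in> F" using assms(2) unfolding normal_def .
  have feasI: "Y \<in> F" if "Y \<subseteq> E" "det_sub C Y \<noteq> 0" for Y
    using that FD unfolding dm_of_mat_def by blast
  have feasD: "det_sub C Y \<noteq> 0" if "Y \<in> F" for Y
    using that FD unfolding dm_of_mat_def by blast
  have adj: "inter_graph_adj E F u v \<longleftrightarrow> u \<in> E \<and> v \<in> E \<and> C u v = 1" for u v
    unfolding inter_graph_adj_def C_def ..
  have tw: "width (twist F A) = 0 \<longleftrightarrow> (\<forall>X\<in>F. card (symdiff A X) = card A)" if A: "A \<subseteq> E" for A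
  proof -
    have finF: "finite F" using fin sub by (meson Pow_iff finite_Pow_iff finite_subset subsetI)
    have "finite (twist F A)" "twist F A \<noteq> {}" unfolding twist_def using finF Fne by auto
    hence w: "width (twist F A) = 0 \<longleftrightarrow> (\<forall>X\<in>twist F A. \<forall>Y\<in>twist F A. card X = card Y)"
      by (rule width_zero_iff)
    have A0: "symdiff A {} = A" by (simp add: symdiff_def)
    have Atw: "A \<in> twist F A" unfolding twist_def using empF A0 by (metis image_eqI)
    show ?thesis
    proof
      assume "width (twist F A) = 0"
      hence H: "\<forall>X\<in>twist F A. \<forall>Y\<in>twist F A. card X = card Y" using w by blast
      show "\<forall>X\<in>F. card (symdiff A X) = card A"
      proof
        fix X assume "X \<in> F"
        hence "symdiff A X \<in> twist F A" unfolding twist_def by blast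
        thus "card (symdiff A X) = card A" using H Atw by blast
      qed
    next
      assume H: "\<forall>X\<in>F. card (symdiff A X) = card A"
      have "\<forall>X\<in>twist F A. card X = card A"
        unfolding twist_def using H by blast
      hence "\<forall>X\<in>twist F A. \<forall>Y\<in>twist F A. card X = card Y" by metis
      thus "width (twist F A) = 0" using w by blast
    qed
  qed
  have "coeff (twist_poly E F) 0 \<noteq> 0 \<longleftrightarrow> (\<exists>A\<subseteq>E. width (twist F A) = 0)"
    by (rule coeff_twist_poly[OF fin])
  also have "\<dots> \<longleftrightarrow> bipartite E (inter_graph_adj E F)"
  proof
    assume "\<exists>A\<subseteq>E. width (twist F A) = 0"
    then obtain A where A: "A \<subseteq> E" and w: "width (twist F A) = 0" by blast
    have H: "\<And>X. X \<in> F \<Longrightarrow> card (symdiff A X) = card A" using tw[OF A] w by blast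
    have finA: "finite A" using A fin by (rule finite_subset)
    have noloop: "C w w = 0" if wE: "w \<in> E" for w
    proof (rule ccontr)
      assume "C w w \<noteq> 0"
      hence "{w} \<in> F" using wE by (intro feasI) auto
      hence e: "card (symdiff A {w}) = card A" by (rule H)
      have "card (symdiff A {w}) + 2 * card (A \<inter> {w}) = card A + card {w}"
        using finA by (intro card_symdiff) auto
      hence "2 * card (A \<inter> {w}) = 1" using e by simp
      thus False by presburger
    qed
    show "bipartite E (inter_graph_adj E F)"
      unfolding bipartite_def
    proof (intro exI[of _ A] conjI A ballI impI)
      fix u v assume uE: "u \<in> E" and vE: "v \<in> E" and a: "inter_graph_adj E F u v"
      hence c: "C u v = 1" using adj by blast
      have uv: "u \<noteq> v" using noloop[OF uE] c by auto
      have "det_sub C {u,v} = C u u * C v v + C u v * C v u" by (rule det_sub_pair[OF uv])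
      also have "\<dots> = 1" using noloop[OF uE] noloop[OF vE] c symC[of u v] by simp
      finally have "{u,v} \<in> F" using uE vE by (intro feasI) auto
      hence e: "card (symdiff A {u,v}) = card A" by (rule H)
      have "card (symdiff A {u,v}) + 2 * card (A \<inter> {u,v}) = card A + card {u,v}"
        using finA by (intro card_symdiff) auto
      hence c1: "card (A \<inter> {u,v}) = 1" using e uv by simp
      show "u \<in> A \<longleftrightarrow> v \<notin> A"
      proof (cases "u \<in> A"; cases "v \<in> A")
        assume "u \<in> A" "v \<in> A"
        hence "A \<inter> {u,v} = {u,v}" by blast
        thus ?thesis using c1 uv by simp
      next
        assume "u \<notin> A" "v \<notin> A"
        hence "A \<inter> {u,v} = {}" by blast
        thus ?thesis using c1 by simp
      qed auto
    qed
  next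
    assume "bipartite E (inter_graph_adj E F)"
    then obtain X where X: "X \<subseteq> E" and H: "\<forall>u\<in>E. \<forall>v\<in>E. inter_graph_adj E F u v \<longrightarrow> (u \<in> X \<longleftrightarrow> v \<notin> X)"
      unfolding bipartite_def by blast
    have finX: "finite X" using X fin by (rule finite_subset)
    have "\<forall>Y\<in>F. card (symdiff X Y) = card X"
    proof
      fix Y assume Y: "Y \<in> F"
      have YE: "Y \<subseteq> E" using sub[OF Y] .
      have finY: "finite Y" using YE fin by (rule finite_subset)
      have "card (Y \<inter> X) = card (Y - X)"
      proof (rule det_bip[OF finY _ feasD[OF Y]])
        fix u v assume "u \<in> Y" "v \<in> Y" "C u v \<noteq> 0"
        hence "u \<in> E" "v \<in> E" "C u v = 1" using YE by auto
        hence "inter_graph_adj E F u v" using adj by blast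
        thus "u \<in> X \<longleftrightarrow> v \<notin> X" using H \<open>u \<in> E\<close> \<open>v \<in> E\<close> by blast
      qed
      moreover have "card Y = card (Y \<inter> X) + card (Y - X)" by (rule card_split[OF finY])
      moreover have "card (symdiff X Y) + 2 * card (X \<inter> Y) = card X + card Y"
        by (rule card_symdiff[OF finX finY])
      moreover have "X \<inter> Y = Y \<inter> X" by blast
      ultimately show "card (symdiff X Y) = card X" by simp
    qed
    thus "\<exists>A\<subseteq>E. width (twist F A) = 0" using tw[OF X] X by blast
  qed
  finally show ?thesis .
qed


end
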